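(* Let $\sigma>0$, $\theta\ge0$, $\gamma\ge0$, $x>0$, and for each $N\in\mathbb N$ let $Z^{N,x}$ be the Markov jump process on $\{k/N:k\in\mathbb N_0\}$ started at $\lfloor Nx\rfloor/N$ which, from state $k/N$, jumps to $(k+1)/N$ at rate $kN\sigma^2/2+k\theta$ and to $(k-1)/N$ at rate $kN\sigma^2/2+k(k-1)\gamma/N$. Then for every $T>0$, $$\sup_{N\ge1}\sup_{0\le t\le T}\mathbb E\big[(Z^{N,x}_t)^4\big]<\infty.$$ *)

theory Defs
  imports "HOL-Analysis.Analysis"
begin

text \<open>Birth-death Markov jump process on state indices k :: nat, with birth rate b k
  (jump k -> k+1) and death rate d k (jump k -> k-1; we require d 0 = 0 in use).
  The transition function is the (Feller) minimal solution of the Kolmogorov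
  backward equations, built from the first-jump decomposition:
  bd_pn n t i j = probability that the chain started at i is at j at time t
  having made exactly n jumps by time t.\<close>

fun bd_pn :: "(nat \<Rightarrow> real) \<Rightarrow> (nat \<Rightarrow> real) \<Rightarrow> nat \<Rightarrow> real \<Rightarrow> nat \<Rightarrow> nat \<Rightarrow> ennreal" where
  "bd_pn b d 0 t i j = (if i = j then ennreal (exp (- (b i + d i) * t)) else 0)"
| "bd_pn b d (Suc n) t i j =
     (\<integral>\<^sup>+ s. indicator {0..t} s * ennreal (exp (- (b i + d i) * s)) *
        (ennreal (b i) * bd_pn b d n (t - s) (i + 1) j
         + ennreal (d i) * bd_pn b d n (t - s) (i - 1) j) \<partial>lborel)"

definition bd_p :: "(nat \<Rightarrow> real) \<Rightarrow> (nat \<Rightarrow> real) \<Rightarrow> real \<Rightarrow> nat \<Rightarrow> nat \<Rightarrow> ennreal" where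
  "bd_p b d t i j = (\<Sum>n. bd_pn b d n t i j)"

definition Z_birth :: "real \<Rightarrow> real \<Rightarrow> nat \<Rightarrow> nat \<Rightarrow> real" where
  "Z_birth \<sigma> \<theta> N k = real k * real N * \<sigma>\<^sup>2 / 2 + real k * \<theta>"

definition Z_death :: "real \<Rightarrow> real \<Rightarrow> nat \<Rightarrow> nat \<Rightarrow> real" where
  "Z_death \<sigma> \<gamma> N k = real k * real N * \<sigma>\<^sup>2 / 2 + real k * (real k - 1) * \<gamma> / real N"

definition Z_start :: "real \<Rightarrow> nat \<Rightarrow> nat" where
  "Z_start x N = nat \<lfloor>real N * x\<rfloor>"

definition Z_moment4 :: "real \<Rightarrow> real \<Rightarrow> real \<Rightarrow> real \<Rightarrow> nat \<Rightarrow> real \<Rightarrow> ennreal" where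
  "Z_moment4 \<sigma> \<theta> \<gamma> x N t =
     (\<Sum>k. ennreal ((real k / real N) ^ 4) *
            bd_p (Z_birth \<sigma> \<theta> N) (Z_death \<sigma> \<gamma> N) t (Z_start x N) k)"

end

theory Submission
  imports Defs
begin
lemma pn_meas: "(\<lambda>t. bd_pn b d m t i j) \<in> borel_measurable borel"
proof (induction m arbitrary: i j)
  case 0
  then show ?case by simp
next
  case (Suc m)
  note [measurable] = Suc
  have "(\<lambda>(t,s). indicator {0..t} s * ennreal (exp (- (b i + d i) * s)) *
        (ennreal (b i) * bd_pn b d m (t - s) (i + 1) j
         + ennreal (d i) * bd_pn b d m (t - s) (i - 1) j)) \<in> borel_measurable (borel \<Otimes>\<^sub>M lborel)"
  proof -
    have e: "sets (borel \<Otimes>\<^sub>M lborel) = sets (borel :: (real\<times>real) measure)"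
    proof -
      have "sets (borel \<Otimes>\<^sub>M lborel) = sets (borel \<Otimes>\<^sub>M (borel::real measure))"
        by (rule sets_pair_measure_cong) simp_all
      also have "\<dots> = sets (borel :: (real\<times>real) measure)"
        by (subst borel_prod) (rule refl)
      finally show ?thesis .
    qed
    have ind: "(\<lambda>p::real\<times>real. indicator {0..fst p} (snd p) :: ennreal) = indicator {p::real\<times>real. 0 \<le> snd p \<and> snd p \<le> fst p}"
      by (auto simp: indicator_def fun_eq_iff)
    have cl: "closed {p::real\<times>real. 0 \<le> snd p \<and> snd p \<le> fst p}"
      by (intro closed_Collect_conj closed_Collect_le continuous_intros)
    have f1: "(\<lambda>p::real\<times>real. bd_pn b d m (fst p - snd p) k j) \<in> borel_measurable borel" for k
      by (rule measurable_compose[OF _ Suc[of k j]]) (intro borel_measurable_continuous_onI continuous_intros)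
    have f2: "(\<lambda>p::real\<times>real. ennreal (exp (- (b i + d i) * snd p))) \<in> borel_measurable borel"
      by (intro measurable_compose[OF _ measurable_ennreal] borel_measurable_continuous_onI continuous_intros)
    have f3: "indicator {p::real\<times>real. 0 \<le> snd p \<and> snd p \<le> fst p} \<in> (borel_measurable borel :: (real\<times>real \<Rightarrow> ennreal) set)"
      using cl by (intro borel_measurable_indicator borel_closed)
    show ?thesis
      unfolding measurable_cong_sets[OF e refl] case_prod_beta
      using f1[of "i+1"] f1[of "i-1"] f2 f3[folded ind]
      by (intro borel_measurable_times_ennreal borel_measurable_add measurable_const) auto
  qed
  then show ?case by (simp add: lborel.borel_measurable_nn_integral)
qed
lemma key_int:
  fixes q C A t :: real
  assumes q: "q \<ge> 0" and C: "C \<ge> 0" and A: "A \<ge> 0" and t: "t \<ge> 0"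
  shows "ennreal (exp (- q * t)) * ennreal A +
    (\<integral>\<^sup>+ s. ennreal (exp (- q * s) * exp (C * (t - s)) * ((q + C) * A)) * indicator {0..t} s \<partial>lborel)
    = ennreal (exp (C * t) * A)"
proof -
  let ?F = "\<lambda>s. - (exp (C * t) * A * exp (- (q + C) * s))"
  let ?f = "\<lambda>s. exp (- q * s) * exp (C * (t - s)) * ((q + C) * A)"
  have fe: "?f s = exp (C * t) * A * ((q + C) * exp (- (q + C) * s))" for s
    by (simp add: algebra_simps flip: exp_add)
  have H: "(?f has_integral (?F t - ?F 0)) {0..t}"
  proof (rule fundamental_theorem_of_calculus[OF t])
    fix s assume "s \<in> {0..t}"
    have "((\<lambda>s. exp (- (q + C) * s)) has_real_derivative (exp (- (q + C) * s) * (- (q + C)))) (at s within {0..t})"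
      by (auto intro!: derivative_eq_intros)
    then have "(?F has_real_derivative ?f s) (at s within {0..t})"
      unfolding fe by (auto intro!: derivative_eq_intros simp: algebra_simps)
    then show "(?F has_vector_derivative ?f s) (at s within {0..t})"
      by (simp add: has_real_derivative_iff_has_vector_derivative)
  qed
  have E: "?F t - ?F 0 = exp (C * t) * A - exp (- q * t) * A"
  proof -
    have "exp (C * t) * exp (- (q + C) * t) = exp (- q * t)"
      by (simp flip: exp_add add: algebra_simps)
    then show ?thesis by (simp add: algebra_simps)
  qed
  from H have I: "(?f has_integral (exp (C * t) * A - exp (- q * t) * A)) {0..t}" unfolding E .
  have "(\<integral>\<^sup>+ s. ennreal (?f s) * indicator {0..t} s \<partial>lborel) = ennreal (exp (C * t) * A - exp (- q * t) * A)"
    by (rule nn_integral_has_integral_lebesgue'[OF _ I]) (use q C A in auto)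
  moreover have "exp (- q * t) * A \<le> exp (C * t) * A"
    using q C t A by (intro mult_right_mono) (auto intro: order.trans[of _ 0] mult_nonneg_nonneg)
  ultimately show ?thesis
    using q C t A by (simp flip: ennreal_plus ennreal_mult)
qed
lemma shift_meas:
  assumes g: "g \<in> borel_measurable borel"
  shows "(\<lambda>s. g (t - s :: real)) \<in> borel_measurable lborel"
proof -
  have h: "(\<lambda>s::real. t - s) \<in> borel_measurable borel"
    by (intro borel_measurable_continuous_onI continuous_intros)
  show ?thesis unfolding measurable_lborel2 by (rule measurable_compose[OF h g])
qed

lemma ind_meas: "(indicator {0..t} :: real \<Rightarrow> ennreal) \<in> borel_measurable lborel"
  by (rule borel_measurable_indicator) simp

lemma main_partial:
  fixes b d V :: "nat \<Rightarrow> real" and C :: real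
  assumes b: "\<And>i. b i \<ge> 0" and d: "\<And>i. d i \<ge> 0" and V: "\<And>i. V i \<ge> 0" and C: "C \<ge> 0"
    and L: "\<And>i. b i * V (i+1) + d i * V (i-1) \<le> (b i + d i + C) * V i"
  shows "t \<ge> 0 \<Longrightarrow> (\<Sum>j. (\<Sum>m<n. bd_pn b d m t i j) * ennreal (V j)) \<le> ennreal (exp (C*t) * V i)"
proof (induction n arbitrary: t i)
  case 0
  then show ?case by simp
next
  case (Suc n)
  define q where "q = b i + d i"
  define P where "P \<tau> k j = (\<Sum>m<n. bd_pn b d m \<tau> k j)" for \<tau> k j
  have Pm: "(\<lambda>\<tau>. P \<tau> k j) \<in> borel_measurable borel" for k j
    unfolding P_def by (intro borel_measurable_sum pn_meas)
  define G where "G j s = indicator {0..t} s * ennreal (exp (- q * s)) *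
       (ennreal (b i) * P (t - s) (i + 1) j + ennreal (d i) * P (t - s) (i - 1) j)" for j s
  have Gm: "G j \<in> borel_measurable lborel" for j
    unfolding G_def
    by (intro borel_measurable_times_ennreal borel_measurable_add measurable_const ind_meas shift_meas Pm
          measurable_compose[OF _ measurable_ennreal] borel_measurable_continuous_onI continuous_intros)
       (auto simp: measurable_lborel1 intro!: borel_measurable_continuous_onI continuous_intros)
  have split: "(\<Sum>m<Suc n. bd_pn b d m t i j) = bd_pn b d 0 t i j + integral\<^sup>N lborel (G j)" for j
  proof -
    have "(\<Sum>m<n. bd_pn b d (Suc m) t i j) = (\<Sum>m<n. \<integral>\<^sup>+ s. indicator {0..t} s * ennreal (exp (- q * s)) *
       (ennreal (b i) * bd_pn b d m (t - s) (i + 1) j + ennreal (d i) * bd_pn b d m (t - s) (i - 1) j) \<partial>lborel)"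
      by (simp add: q_def)
    also have "\<dots> = (\<integral>\<^sup>+ s. (\<Sum>m<n. indicator {0..t} s * ennreal (exp (- q * s)) *
       (ennreal (b i) * bd_pn b d m (t - s) (i + 1) j + ennreal (d i) * bd_pn b d m (t - s) (i - 1) j)) \<partial>lborel)"
      apply (rule nn_integral_sum[symmetric])
        apply (intro borel_measurable_times_ennreal borel_measurable_add measurable_const ind_meas shift_meas pn_meas
          measurable_compose[OF _ measurable_ennreal] borel_measurable_continuous_onI continuous_intros)
        by (auto simp: measurable_lborel1 intro!: borel_measurable_continuous_onI continuous_intros)
    also have "\<dots> = integral\<^sup>N lborel (G j)"
      unfolding G_def P_def
      by (simp add: sum_distrib_left sum_distrib_right sum.distrib algebra_simps)
    finally show ?thesis by (simp only: sum.lessThan_Suc_shift)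
  qed
  have q0: "q \<ge> 0" using b d by (simp add: q_def add_nonneg_nonneg)
  have sum0: "(\<Sum>j. bd_pn b d 0 t i j * ennreal (V j)) = ennreal (exp (- q * t)) * ennreal (V i)"
  proof -
    have "(\<lambda>j. bd_pn b d 0 t i j * ennreal (V j)) = (\<lambda>j. if j = i then ennreal (exp (- q * t)) * ennreal (V i) else 0)"
      by (auto simp: q_def fun_eq_iff)
    then show ?thesis
      using sums_unique[OF sums_single[of i "\<lambda>_. ennreal (exp (- q * t)) * ennreal (V i)"]] by simp
  qed
  have sumG: "(\<Sum>j. integral\<^sup>N lborel (G j) * ennreal (V j)) = (\<integral>\<^sup>+ s. (\<Sum>j. G j s * ennreal (V j)) \<partial>lborel)"
    by (subst nn_integral_suminf) (auto simp: nn_integral_multc[OF Gm] intro!: borel_measurable_times_ennreal Gm[unfolded measurable_lborel2])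
  have pw: "(\<Sum>j. G j s * ennreal (V j)) \<le> ennreal (exp (- q * s) * exp (C * (t - s)) * ((q + C) * V i)) * indicator {0..t} s" for s
  proof (cases "s \<in> {0..t}")
    case False
    then show ?thesis by (simp add: G_def)
  next
    case True
    then have ts: "t - s \<ge> 0" by simp
    have "(\<Sum>j. G j s * ennreal (V j)) = (\<Sum>j. ennreal (exp (- q * s)) * ennreal (b i) * (P (t - s) (i + 1) j * ennreal (V j))
         + ennreal (exp (- q * s)) * ennreal (d i) * (P (t - s) (i - 1) j * ennreal (V j)))"
      using True by (simp add: G_def algebra_simps)
    also have "\<dots> = ennreal (exp (- q * s)) * ennreal (b i) * (\<Sum>j. P (t - s) (i + 1) j * ennreal (V j))
         + ennreal (exp (- q * s)) * ennreal (d i) * (\<Sum>j. P (t - s) (i - 1) j * ennreal (V j))"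
      by (subst suminf_add[OF summableI summableI, symmetric]) simp
    also have "\<dots> \<le> ennreal (exp (- q * s)) * ennreal (b i) * ennreal (exp (C * (t - s)) * V (i + 1))
         + ennreal (exp (- q * s)) * ennreal (d i) * ennreal (exp (C * (t - s)) * V (i - 1))"
      unfolding P_def by (intro add_mono mult_left_mono Suc.IH ts) auto
    also have "\<dots> = ennreal (exp (- q * s) * exp (C * (t - s)) * (b i * V (i + 1) + d i * V (i - 1)))"
    proof -
      let ?E = "exp (C * (t - s))" and ?e = "exp (- q * s)"
      have 1: "ennreal ?e * ennreal (b i) * ennreal (?E * V (i + 1)) = ennreal (?e * ?E * (b i * V (i + 1)))"
        using b[of i] V[of "i+1"] by (simp add: ennreal_mult[symmetric] mult_ac)
      have 2: "ennreal ?e * ennreal (d i) * ennreal (?E * V (i - 1)) = ennreal (?e * ?E * (d i * V (i - 1)))"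
        using d[of i] V[of "i-1"] by (simp add: ennreal_mult[symmetric] mult_ac)
      have 3: "ennreal (?e * ?E * (b i * V (i + 1))) + ennreal (?e * ?E * (d i * V (i - 1)))
          = ennreal (?e * ?E * (b i * V (i + 1) + d i * V (i - 1)))"
        using b[of i] V[of "i+1"] d[of i] V[of "i-1"]
        by (simp add: ennreal_plus[symmetric] distrib_left del: ennreal_plus)
      show ?thesis unfolding 1 2 3 ..
    qed
    also have "\<dots> \<le> ennreal (exp (- q * s) * exp (C * (t - s)) * ((q + C) * V i))"
    proof (rule ennreal_leI, rule mult_left_mono)
      show "b i * V (i + 1) + d i * V (i - 1) \<le> (q + C) * V i" using L[of i] by (simp add: q_def)
    qed simp
    finally show ?thesis using True by simp
  qed
  have "(\<Sum>j. (\<Sum>m<Suc n. bd_pn b d m t i j) * ennreal (V j))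
      = (\<Sum>j. bd_pn b d 0 t i j * ennreal (V j) + integral\<^sup>N lborel (G j) * ennreal (V j))"
    by (simp only: split distrib_right)
  also have "\<dots> = ennreal (exp (- q * t)) * ennreal (V i) + (\<integral>\<^sup>+ s. (\<Sum>j. G j s * ennreal (V j)) \<partial>lborel)"
    by (subst suminf_add[OF summableI summableI, symmetric]) (simp only: sum0 sumG)
  also have "\<dots> \<le> ennreal (exp (- q * t)) * ennreal (V i) +
      (\<integral>\<^sup>+ s. ennreal (exp (- q * s) * exp (C * (t - s)) * ((q + C) * V i)) * indicator {0..t} s \<partial>lborel)"
    by (intro add_left_mono nn_integral_mono pw)
  also have "\<dots> = ennreal (exp (C * t) * V i)"
    by (rule key_int[OF q0 C V Suc.prems])
  finally show ?case .
qed

lemma main_full: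
  fixes b d V :: "nat \<Rightarrow> real" and C :: real
  assumes b: "\<And>i. b i \<ge> 0" and d: "\<And>i. d i \<ge> 0" and V: "\<And>i. V i \<ge> 0" and C: "C \<ge> 0"
    and L: "\<And>i. b i * V (i+1) + d i * V (i-1) \<le> (b i + d i + C) * V i"
    and t: "t \<ge> 0"
  shows "(\<Sum>j. bd_p b d t i j * ennreal (V j)) \<le> ennreal (exp (C*t) * V i)"
proof -
  have "(\<Sum>j. bd_p b d t i j * ennreal (V j)) = (\<Sum>j. SUP n. (\<Sum>m<n. bd_pn b d m t i j) * ennreal (V j))"
    unfolding bd_p_def suminf_eq_SUP SUP_mult_right_ennreal ..
  also have "\<dots> = (SUP n. \<Sum>j. (\<Sum>m<n. bd_pn b d m t i j) * ennreal (V j))"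
  proof (rule ennreal_suminf_SUP_eq)
    fix j show "incseq (\<lambda>n. (\<Sum>m<n. bd_pn b d m t i j) * ennreal (V j))"
      by (intro incseq_SucI mult_right_mono) auto
  qed
  also have "\<dots> \<le> ennreal (exp (C*t) * V i)"
    by (intro SUP_least main_partial[OF b d V C L t])
  finally show ?thesis .
qed

lemma pow_le_4: "(z::real) \<ge> 0 \<Longrightarrow> j \<le> 4 \<Longrightarrow> z ^ j \<le> z ^ 4 + 1"
proof (cases "z \<le> 1")
  case True
  assume "z \<ge> 0" "j \<le> 4"
  then have "z ^ j \<le> 1" using True by (simp add: power_le_one)
  then show ?thesis using \<open>z \<ge> 0\<close> by (smt (verit) zero_le_power)
next
  case False
  assume "z \<ge> 0" "j \<le> 4"
  then have "z ^ j \<le> z ^ 4" using False by (intro power_increasing) auto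
  then show ?thesis by simp
qed

lemma gen_ineq:
  fixes \<sigma> \<theta> \<gamma> :: real and N k :: nat
  assumes s: "\<sigma> > 0" and th: "\<theta> \<ge> 0" and g: "\<gamma> \<ge> 0" and N: "N \<ge> 1"
  defines "V \<equiv> \<lambda>k::nat. (real k / real N) ^ 4 + 1"
  shows "Z_birth \<sigma> \<theta> N k * V (k+1) + Z_death \<sigma> \<gamma> N k * V (k-1)
     \<le> (Z_birth \<sigma> \<theta> N k + Z_death \<sigma> \<gamma> N k + (8 * \<sigma>\<^sup>2 + 16 * \<theta>)) * V k"
proof (cases "k = 0")
  case True
  then show ?thesis using s th by (simp add: Z_birth_def Z_death_def V_def)
next
  case False
  define n where "n = real N"
  define K where "K = real k"
  define z where "z = K / n"
  define u where "u = 1 / n"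
  have n1: "n \<ge> 1" using N by (simp add: n_def)
  have K1: "K \<ge> 1" using False by (simp add: K_def)
  have z0: "z \<ge> 0" using n1 K1 by (simp add: z_def)
  have u0: "u > 0" "u \<le> 1" using n1 by (auto simp: u_def)
  have nu: "n * u = 1" using n1 by (simp add: u_def)
  have Kz: "K = n * z" using n1 by (simp add: z_def)
  have Vk: "V k = z^4 + 1" by (simp add: V_def z_def K_def n_def)
  have Vp: "V (k+1) = (z + u)^4 + 1" by (simp add: V_def K_def n_def z_def u_def add_divide_distrib add.commute)
  have Vm: "V (k-1) = (z - u)^4 + 1" using False by (simp add: V_def K_def n_def of_nat_diff z_def u_def diff_divide_distrib)
  define a where "a = K * n * \<sigma>\<^sup>2 / 2"
  define gg where "gg = K * (K - 1) * \<gamma> / n"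
  have B: "Z_birth \<sigma> \<theta> N k = a + K * \<theta>" by (simp add: Z_birth_def a_def K_def n_def)
  have D: "Z_death \<sigma> \<gamma> N k = a + gg" by (simp add: Z_death_def a_def gg_def K_def n_def)
  have p1: "(z+u)^4 + (z-u)^4 - 2*z^4 = 2*u^2*(6*z^2+u^2)" by algebra
  have a2: "a * (2 * u^2) = z * \<sigma>\<^sup>2"
  proof -
    have "a * (2 * u^2) = z * \<sigma>\<^sup>2 * (n * u)^2" by (simp add: a_def Kz power2_eq_square algebra_simps)
    then show ?thesis by (simp add: nu)
  qed
  have e1: "a * (V (k+1) + V (k-1) - 2 * V k) = \<sigma>\<^sup>2 * (6 * z^3 + z * u^2)"
  proof -
    have "V (k+1) + V (k-1) - 2 * V k = (z+u)^4 + (z-u)^4 - 2*z^4" unfolding Vp Vm Vk by simp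
    then have "a * (V (k+1) + V (k-1) - 2 * V k) = a * (2 * u^2 * (6*z^2+u^2))" unfolding p1 by simp
    then have "a * (V (k+1) + V (k-1) - 2 * V k) = a * (2 * u^2) * (6*z^2+u^2)" by (simp only: mult.assoc)
    also have "\<dots> = \<sigma>\<^sup>2 * (6 * z^3 + z * u^2)" unfolding a2 by (simp add: algebra_simps power3_eq_cube power2_eq_square)
    finally show ?thesis .
  qed
  have e2: "K * \<theta> * (V (k+1) - V k) = \<theta> * (4 * z^4 + 6 * z^3 * u + 4 * z^2 * u^2 + z * u^3)"
  proof -
    have p2: "(z+u)^4 - z^4 = u * (4*z^3 + 6*z^2*u + 4*z*u^2 + u^3)" by algebra
    have "K * \<theta> * (V (k+1) - V k) = z * \<theta> * (n * u) * (4*z^3 + 6*z^2*u + 4*z*u^2 + u^3)"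
    proof -
      have "V (k+1) - V k = u * (4*z^3 + 6*z^2*u + 4*z*u^2 + u^3)" unfolding Vp Vk p2[symmetric] by simp
      then show ?thesis by (simp add: Kz mult_ac)
    qed
    also have "\<dots> = \<theta> * (4 * z^4 + 6 * z^3 * u + 4 * z^2 * u^2 + z * u^3)"
      unfolding nu by (simp add: algebra_simps power3_eq_cube power2_eq_square power4_eq_xxxx)
    finally show ?thesis .
  qed
  have e3: "gg * (V (k-1) - V k) \<le> 0"
  proof -
    have "gg \<ge> 0" using K1 n1 g by (simp add: gg_def)
    moreover have "V (k-1) \<le> V k"
    proof -
      have "z - u \<ge> 0" using K1 n1 by (simp add: z_def u_def divide_right_mono)
      then have "(z - u)^4 \<le> z^4" using u0 by (intro power_mono) auto
      then show ?thesis unfolding Vm Vk by simp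
    qed
    ultimately show ?thesis by (simp add: mult_nonneg_nonpos)
  qed
  have z1: "z \<le> z^4 + 1" and z2: "z^2 \<le> z^4 + 1" and z3: "z^3 \<le> z^4 + 1"
    using pow_le_4[OF z0, of 1] pow_le_4[OF z0, of 2] pow_le_4[OF z0, of 3] by auto
  have u2: "u^2 \<le> 1" "u^3 \<le> 1" using u0 by (auto intro: power_le_one)
  have m1: "z * u^2 \<le> z" "z^3 * u \<le> z^3" "z^2 * u^2 \<le> z^2" "z * u^3 \<le> z"
    using u2 u0 z0 by (auto intro!: mult_left_le)
  have f1: "\<sigma>\<^sup>2 * (6 * z^3 + z * u^2) \<le> \<sigma>\<^sup>2 * (8 * (z^4 + 1))"
  proof (rule mult_left_mono)
    have "z^4 \<ge> 0" using z0 by simp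
    then show "6 * z^3 + z * u^2 \<le> 8 * (z^4 + 1)" using z1 z3 m1 by (smt (verit))
  qed simp
  have f2: "\<theta> * (4 * z^4 + 6 * z^3 * u + 4 * z^2 * u^2 + z * u^3) \<le> \<theta> * (16 * (z^4 + 1))"
  proof (rule mult_left_mono)
    have "z^4 \<ge> 0" using z0 by simp
    then show "4 * z^4 + 6 * z^3 * u + 4 * z^2 * u^2 + z * u^3 \<le> 16 * (z^4 + 1)" using z1 z2 z3 m1 mult.assoc[of 6 "z^3" u] mult.assoc[of 4 "z^2" "u^2"] by (smt (verit))
  qed (rule th)
  have "Z_birth \<sigma> \<theta> N k * V (k+1) + Z_death \<sigma> \<gamma> N k * V (k-1)
     - (Z_birth \<sigma> \<theta> N k + Z_death \<sigma> \<gamma> N k + (8 * \<sigma>\<^sup>2 + 16 * \<theta>)) * V k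
     = a * (V (k+1) + V (k-1) - 2 * V k) + K * \<theta> * (V (k+1) - V k) + gg * (V (k-1) - V k)
       - (\<sigma>\<^sup>2 * (8 * (z^4 + 1)) + \<theta> * (16 * (z^4 + 1)))"
    unfolding B D Vk by (simp add: algebra_simps)
  also have "\<dots> \<le> 0" using e1 e2 e3 f1 f2 by (smt (verit))
  finally show ?thesis by simp
qed

lemma Z_rates_nonneg:
  assumes "\<sigma> > 0" "\<theta> \<ge> 0" "\<gamma> \<ge> 0"
  shows "Z_birth \<sigma> \<theta> N k \<ge> 0" "Z_death \<sigma> \<gamma> N k \<ge> 0"
proof -
  show "Z_birth \<sigma> \<theta> N k \<ge> 0" using assms by (simp add: Z_birth_def)
  have "real k * (real k - 1) \<ge> 0" by (cases k) auto
  then show "Z_death \<sigma> \<gamma> N k \<ge> 0" using assms by (simp add: Z_death_def)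
qed

theorem lemma5:
  fixes \<sigma> \<theta> \<gamma> x T :: real
  assumes "\<sigma> > 0" and "\<theta> \<ge> 0" and "\<gamma> \<ge> 0" and "x > 0" and "T > 0"
  shows "(SUP N \<in> {1::nat..}. SUP t \<in> {0..T}. Z_moment4 \<sigma> \<theta> \<gamma> x N t) < \<infinity>"
proof -
  define C where "C = 8 * \<sigma>\<^sup>2 + 16 * \<theta>"
  define B where "B = exp (C * T) * (x ^ 4 + 1)"
  have C0: "C \<ge> 0" using assms by (simp add: C_def)
  have bound: "Z_moment4 \<sigma> \<theta> \<gamma> x N t \<le> ennreal B" if N: "N \<ge> 1" and t: "t \<in> {0..T}" for N t
  proof -
    define V where "V = (\<lambda>k::nat. (real k / real N) ^ 4 + 1)"
    have V0: "V k \<ge> 0" for k by (simp add: V_def add_nonneg_nonneg)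
    have "Z_moment4 \<sigma> \<theta> \<gamma> x N t = (\<Sum>k. ennreal ((real k / real N) ^ 4) *
            bd_p (Z_birth \<sigma> \<theta> N) (Z_death \<sigma> \<gamma> N) t (Z_start x N) k)"
      by (simp add: Z_moment4_def)
    also have "\<dots> \<le> (\<Sum>k. bd_p (Z_birth \<sigma> \<theta> N) (Z_death \<sigma> \<gamma> N) t (Z_start x N) k * ennreal (V k))"
    proof (intro suminf_le summableI)
      fix k
      show "ennreal ((real k / real N) ^ 4) * bd_p (Z_birth \<sigma> \<theta> N) (Z_death \<sigma> \<gamma> N) t (Z_start x N) k
        \<le> bd_p (Z_birth \<sigma> \<theta> N) (Z_death \<sigma> \<gamma> N) t (Z_start x N) k * ennreal (V k)"
        by (subst mult.commute) (intro mult_left_mono ennreal_leI, auto simp: V_def)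
    qed
    also have "\<dots> \<le> ennreal (exp (C * t) * V (Z_start x N))"
      apply (rule main_full)
           apply (rule Z_rates_nonneg[OF assms(1-3)])
          apply (rule Z_rates_nonneg[OF assms(1-3)])
         apply (rule V0)
        apply (rule C0)
      subgoal for i using gen_ineq[OF assms(1-3) N, of i] by (simp add: C_def V_def)
      using t by simp
    also have "\<dots> \<le> ennreal B"
    proof (rule ennreal_leI)
      have e: "exp (C * t) \<le> exp (C * T)" using t C0 by (auto intro: mult_left_mono)
      have "real (Z_start x N) \<le> real N * x"
        using assms(4) N by (simp add: Z_start_def)
      then have "real (Z_start x N) / real N \<le> x" using N by (simp add: divide_le_eq mult.commute)
      then have "V (Z_start x N) \<le> x ^ 4 + 1" unfolding V_def by (auto intro!: power_mono)
      then show "exp (C * t) * V (Z_start x N) \<le> B"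
        unfolding B_def using e V0 by (intro mult_mono) (auto intro: add_nonneg_nonneg)
    qed
    finally show ?thesis .
  qed
  have "(SUP N \<in> {1::nat..}. SUP t \<in> {0..T}. Z_moment4 \<sigma> \<theta> \<gamma> x N t) \<le> ennreal B"
    by (intro SUP_least) (auto intro: bound)
  also have "\<dots> < \<infinity>" by simp
  finally show ?thesis .
qed

end
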